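(* Let $\mathsf{A}=\{A_1,\ldots,A_\ell\}$ be a finite set of $d \times d$ matrices over $\mathbb{C}$, and let $\mathsf{R} \subseteq \mathsf{A}$ be the set of all elements of $\mathsf{A}$ which have rank greater than or equal to two. Suppose that either $\mathsf{R}$ is empty or $\varrho(\mathsf{R})<\varrho(\mathsf{A})$. Then there exist an integer $n \geq 1$ and indices $i_1,\ldots,i_n \in \{1,\ldots,\ell\}$ such that each element of $\mathsf{A}$ of rank exactly one appears at most once in the sequence $A_{i_1},\ldots,A_{i_n}$, and \[\varrho(\mathsf{A})=\rho(A_{i_1}\cdots A_{i_n})^{1/n}.\]
   Context: For a square matrix $A$, $\rho(A)$ denotes its ordinary spectral radius. For a nonempty bounded set $\mathsf{A}$ of $d\times d$ complex matrices, the joint spectral radius is \[\varrho(\mathsf{A})=\lim_{n \to \infty} \sup\left\{\left\|A_{i_n} \cdots A_{i_1}\right\|^{1/n} \colon A_{i_j} \in \mathsf{A}\right\},\] where $\|\cdot\|$ is any matrix norm (the limit exists and is independent of the norm). *)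

theory Defs
  imports Complex_Main "Jordan_Normal_Form.Spectral_Radius" "Jordan_Normal_Form.DL_Rank"
begin

text \<open>Frobenius norm of a complex matrix (any matrix norm gives the same JSR).\<close>
definition mat_fnorm :: "complex mat \<Rightarrow> real" where
  "mat_fnorm A = sqrt (\<Sum>i<dim_row A. \<Sum>j<dim_col A. (cmod (A $$ (i,j)))\<^sup>2)"

definition mat_list_prod :: "nat \<Rightarrow> complex mat list \<Rightarrow> complex mat" where
  "mat_list_prod d ws = foldr (\<lambda>B P. B * P) ws (1\<^sub>m d)"

definition jsr :: "nat \<Rightarrow> complex mat set \<Rightarrow> real" where
  "jsr d S = lim (\<lambda>n. (SUP ws \<in> {ws. length ws = n \<and> set ws \<subseteq> S}.
                          mat_fnorm (mat_list_prod d ws) powr (1 / real n)))"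

definition mat_rank :: "nat \<Rightarrow> complex mat \<Rightarrow> nat" where
  "mat_rank d M = vec_space.rank d M"

end

theory Submission
  imports Defs
begin

lemma (in vec_space) rank_le1_outer:
  assumes M: "M \<in> carrier_mat n n" and r: "rank M \<le> 1"
  shows "\<exists>x y. x \<in> carrier_vec n \<and> (\<forall>i<n. \<forall>j<n. M $$ (i,j) = x $ i * y j)"
proof (cases "\<forall>j<n. col M j = 0\<^sub>v n")
  case True
  show ?thesis
  proof (intro exI conjI allI impI)
    fix i j assume "i < n" "j < n"
    with True have "col M j $ i = 0" by simp
    thus "M $$ (i,j) = 0\<^sub>v n $ i * (\<lambda>_. 0) j" using M \<open>i<n\<close> \<open>j<n\<close> by simp
  qed simp
next
  case False
  then obtain c0 where c0: "c0 < n" "col M c0 \<noteq> 0\<^sub>v n" by auto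
  define u where "u = col M c0"
  have uc: "u \<in> carrier_vec n" using M c0 unfolding u_def by auto
  have li0: "lin_indpt {}" unfolding lin_dep_def by auto
  have "u \<notin> span {}" using span_empty c0 u_def by auto
  hence liu: "lin_indpt {u}" using lin_dep_iff_in_span[of "{}" u] li0 uc by auto
  have "\<forall>j<n. \<exists>a. col M j = a \<cdot>\<^sub>v u"
  proof (intro allI impI)
    fix j assume j: "j < n"
    define v where "v = col M j"
    have vc: "v \<in> carrier_vec n" using M j unfolding v_def by auto
    show "\<exists>a. col M j = a \<cdot>\<^sub>v u"
    proof (cases "v \<in> span {u}")
      case True
      from finite_in_span[of "{u}" v] True uc obtain a where "lincomb a {u} = v" by auto
      hence "v = a u \<cdot>\<^sub>v u" unfolding lincomb_def using uc by simp
      thus ?thesis unfolding v_def by auto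
    next
      case False
      have "v \<noteq> u" using False span_self[OF uc] by auto
      have "lin_indpt ({u} \<union> {v})" using lin_dep_iff_in_span[of "{u}" v] liu uc vc False \<open>v\<noteq>u\<close> by auto
      moreover have "{u} \<union> {v} \<subseteq> set (cols M)" using M j c0 unfolding u_def v_def
        by (auto simp: cols_def)
      ultimately have "rank M \<ge> card ({u} \<union> {v})" using rank_ge_card_indpt[OF M] by blast
      with \<open>v\<noteq>u\<close> r show ?thesis by auto
    qed
  qed
  then obtain y where y: "\<And>j. j < n \<Longrightarrow> col M j = y j \<cdot>\<^sub>v u" by metis
  show ?thesis
  proof (intro exI conjI allI impI)
    fix i j assume i: "i < n" and j: "j < n"
    have "M $$ (i,j) = col M j $ i" using M i j by simp
    also have "\<dots> = u $ i * y j" using y[OF j] i uc by simp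
    finally show "M $$ (i,j) = u $ i * y j" .
  qed (rule uc)
qed

definition nrm :: "complex mat \<Rightarrow> real" where
  "nrm M = (\<Sum>i<dim_row M. \<Sum>j<dim_col M. cmod (M $$ (i,j)))"
definition nf :: "nat \<Rightarrow> (nat \<Rightarrow> complex) \<Rightarrow> real" where
  "nf d f = (\<Sum>i<d. cmod (f i))"
definition outer :: "nat \<Rightarrow> (nat \<Rightarrow> complex) \<Rightarrow> (nat \<Rightarrow> complex) \<Rightarrow> complex mat" where
  "outer d x y = mat d d (\<lambda>(i,j). x i * y j)"
definition rowmul :: "nat \<Rightarrow> (nat \<Rightarrow> complex) \<Rightarrow> complex mat \<Rightarrow> nat \<Rightarrow> complex" where
  "rowmul d y P j = (\<Sum>i<d. y i * P $$ (i,j))"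
definition sp :: "nat \<Rightarrow> (nat \<Rightarrow> complex) \<Rightarrow> (nat \<Rightarrow> complex) \<Rightarrow> complex" where
  "sp d z x = (\<Sum>j<d. z j * x j)"

lemma pr_Nil[simp]: "mat_list_prod d [] = 1\<^sub>m d"
  by (simp add: mat_list_prod_def)
lemma pr_Cons[simp]: "mat_list_prod d (a # ws) = a * mat_list_prod d ws"
  by (simp add: mat_list_prod_def)
lemma pr_carrier: "set ws \<subseteq> carrier_mat d d \<Longrightarrow> mat_list_prod d ws \<in> carrier_mat d d"
  by (induction ws) auto
lemma pr_append: "set xs \<subseteq> carrier_mat d d \<Longrightarrow> set ys \<subseteq> carrier_mat d d \<Longrightarrow>
   mat_list_prod d (xs @ ys) = mat_list_prod d xs * mat_list_prod d ys"
proof (induction xs)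
  case Nil
  then show ?case using pr_carrier[of ys d] by simp
next
  case (Cons a xs)
  then show ?case using pr_carrier[of xs d] pr_carrier[of ys d]
    by (simp add: assoc_mult_mat[of a d d _ d _ d])
qed

lemma nrm_nonneg: "0 \<le> nrm M"
  unfolding nrm_def by (intro sum_nonneg) auto
lemma nf_nonneg: "0 \<le> nf d f"
  unfolding nf_def by (intro sum_nonneg) auto

lemma nrm_mult: assumes A: "A \<in> carrier_mat d d" and B: "B \<in> carrier_mat d d"
  shows "nrm (A * B) \<le> nrm A * nrm B"
proof -
  have rowB: "(\<Sum>j<d. cmod (B $$ (l,j))) \<le> nrm B" if "l < d" for l
  proof -
    have "(\<Sum>j<d. cmod (B $$ (l,j))) = (\<Sum>i\<in>{l}. \<Sum>j<d. cmod (B $$ (i,j)))" by simp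
    also have "\<dots> \<le> (\<Sum>i<d. \<Sum>j<d. cmod (B $$ (i,j)))"
      by (rule sum_mono2) (use that in \<open>auto intro: sum_nonneg\<close>)
    finally show ?thesis using B unfolding nrm_def by simp
  qed
  have "nrm (A * B) = (\<Sum>i<d. \<Sum>j<d. cmod (\<Sum>l<d. A $$ (i,l) * B $$ (l,j)))"
    unfolding nrm_def using A B
    by (intro sum.cong refl) (auto simp: scalar_prod_def row_def col_def lessThan_atLeast0)
  also have "\<dots> \<le> (\<Sum>i<d. \<Sum>j<d. \<Sum>l<d. cmod (A $$ (i,l)) * cmod (B $$ (l,j)))"
    by (intro sum_mono) (auto intro!: order.trans[OF norm_sum] simp: norm_mult)
  also have "\<dots> = (\<Sum>i<d. \<Sum>l<d. cmod (A $$ (i,l)) * (\<Sum>j<d. cmod (B $$ (l,j))))"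
    by (rule sum.cong[OF refl]) (subst sum.swap, simp add: sum_distrib_left)
  also have "\<dots> \<le> (\<Sum>i<d. \<Sum>l<d. cmod (A $$ (i,l)) * nrm B)"
    by (intro sum_mono mult_left_mono rowB) auto
  also have "\<dots> = nrm A * nrm B"
    using A unfolding nrm_def by (simp add: sum_distrib_right)
  finally show ?thesis .
qed

lemma nrm_smult: "nrm (c \<cdot>\<^sub>m A) = cmod c * nrm A"
  unfolding nrm_def by (simp add: sum_distrib_left norm_mult)

lemma nrm_one: "nrm (1\<^sub>m d) = real d"
proof -
  have "nrm (1\<^sub>m d) = (\<Sum>i<d. \<Sum>j<d. if j = i then 1 else 0)"
    unfolding nrm_def by (intro sum.cong refl) auto
  also have "\<dots> = real d" by (simp add: sum.delta)
  finally show ?thesis .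
qed

lemma entry_le_fnorm: assumes "i < dim_row A" "j < dim_col A"
  shows "cmod (A $$ (i,j)) \<le> mat_fnorm A"
proof -
  have "(cmod (A $$ (i,j)))\<^sup>2 = (\<Sum>i'\<in>{i}. \<Sum>j'\<in>{j}. (cmod (A $$ (i',j')))\<^sup>2)" by simp
  also have "\<dots> \<le> (\<Sum>i'\<in>{i}. \<Sum>j'<dim_col A. (cmod (A $$ (i',j')))\<^sup>2)"
    by (intro sum_mono sum_mono2) (use assms in auto)
  also have "\<dots> \<le> (\<Sum>i'<dim_row A. \<Sum>j'<dim_col A. (cmod (A $$ (i',j')))\<^sup>2)"
    by (intro sum_mono2) (use assms in \<open>auto intro: sum_nonneg\<close>)
  finally have "(cmod (A $$ (i,j)))\<^sup>2 \<le> (\<Sum>i'<dim_row A. \<Sum>j'<dim_col A. (cmod (A $$ (i',j')))\<^sup>2)" .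
  hence "sqrt ((cmod (A $$ (i,j)))\<^sup>2) \<le> mat_fnorm A" unfolding mat_fnorm_def
    using real_sqrt_le_mono by blast
  thus ?thesis by simp
qed

lemma nrm_le_fnorm: assumes A: "A \<in> carrier_mat d d"
  shows "nrm A \<le> real d * real d * mat_fnorm A"
proof -
  have dA: "dim_row A = d" "dim_col A = d" using A by auto
  have "nrm A \<le> (\<Sum>i<d. \<Sum>j<d. mat_fnorm A)" unfolding nrm_def dA
    by (intro sum_mono entry_le_fnorm) (auto simp: dA)
  thus ?thesis by simp
qed

lemma fnorm_le_nrm: "mat_fnorm A \<le> nrm A"
proof -
  let ?x = "\<lambda>i j. cmod (A $$ (i,j))"
  have le: "?x i j \<le> nrm A" if "i < dim_row A" "j < dim_col A" for i j
  proof -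
    have "?x i j = (\<Sum>i'\<in>{i}. \<Sum>j'\<in>{j}. ?x i' j')" by simp
    also have "\<dots> \<le> (\<Sum>i'\<in>{i}. \<Sum>j'<dim_col A. ?x i' j')"
      by (intro sum_mono sum_mono2) (use that in auto)
    also have "\<dots> \<le> (\<Sum>i'<dim_row A. \<Sum>j'<dim_col A. ?x i' j')"
      by (intro sum_mono2) (use that in \<open>auto intro: sum_nonneg\<close>)
    finally show ?thesis unfolding nrm_def .
  qed
  have "(\<Sum>i<dim_row A. \<Sum>j<dim_col A. (?x i j)\<^sup>2) \<le> (\<Sum>i<dim_row A. \<Sum>j<dim_col A. ?x i j * nrm A)"
    unfolding power2_eq_square by (intro sum_mono mult_left_mono le) auto
  also have "\<dots> = (nrm A)\<^sup>2" unfolding nrm_def by (simp add: sum_distrib_right power2_eq_square)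
  finally have "mat_fnorm A \<le> sqrt ((nrm A)\<^sup>2)" unfolding mat_fnorm_def
    using real_sqrt_le_mono by blast
  thus ?thesis using nrm_nonneg[of A] by simp
qed

lemma outer_carrier[simp]: "outer d x y \<in> carrier_mat d d"
  unfolding outer_def by simp

lemma outer_mult_outer: "outer d x y * outer d x' y' = sp d y x' \<cdot>\<^sub>m outer d x y'"
  unfolding outer_def sp_def
  by (rule eq_matI) (auto simp: scalar_prod_def row_def col_def lessThan_atLeast0 sum_distrib_left
       sum_distrib_right mult_ac intro!: sum.cong)

lemma outer_mult: assumes "P \<in> carrier_mat d d"
  shows "outer d x y * P = outer d x (rowmul d y P)"
  unfolding outer_def rowmul_def using assms
  by (intro eq_matI) (auto simp: scalar_prod_def row_def col_def lessThan_atLeast0 sum_distrib_left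
       mult_ac intro!: sum.cong)

lemma nrm_outer: "nrm (outer d x y) = nf d x * nf d y"
  unfolding nrm_def nf_def outer_def by (simp add: norm_mult sum_product)

lemma nf_rowmul: assumes "P \<in> carrier_mat d d" shows "nf d (rowmul d y P) \<le> nf d y * nrm P"
proof -
  have "nf d (rowmul d y P) \<le> (\<Sum>j<d. \<Sum>i<d. cmod (y i) * cmod (P $$ (i,j)))"
    unfolding nf_def rowmul_def
    by (intro sum_mono) (auto intro!: order.trans[OF norm_sum] simp: norm_mult)
  also have "\<dots> = (\<Sum>i<d. cmod (y i) * (\<Sum>j<d. cmod (P $$ (i,j))))"
    by (subst sum.swap) (simp add: sum_distrib_left)
  also have "\<dots> \<le> (\<Sum>i<d. cmod (y i) * nrm P)"
  proof (intro sum_mono mult_left_mono)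
    fix i assume i: "i \<in> {..<d}"
    have "(\<Sum>j<d. cmod (P $$ (i,j))) = (\<Sum>i'\<in>{i}. \<Sum>j<d. cmod (P $$ (i',j)))" by simp
    also have "\<dots> \<le> (\<Sum>i'<d. \<Sum>j<d. cmod (P $$ (i',j)))"
      by (rule sum_mono2) (use i in \<open>auto intro: sum_nonneg\<close>)
    finally show "(\<Sum>j<d. cmod (P $$ (i,j))) \<le> nrm P" using assms unfolding nrm_def by simp
  qed auto
  also have "\<dots> = nf d y * nrm P" unfolding nf_def by (simp add: sum_distrib_right)
  finally show ?thesis .
qed

lemma sp_bound: "cmod (sp d z x) \<le> nf d z * nf d x"
proof -
  have "cmod (sp d z x) \<le> (\<Sum>j<d. cmod (z j) * cmod (x j))"
    unfolding sp_def by (auto intro!: order.trans[OF norm_sum] simp: norm_mult)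
  also have "\<dots> \<le> (\<Sum>j<d. cmod (z j) * nf d x)"
  proof (intro sum_mono mult_left_mono)
    fix j assume j: "j \<in> {..<d}"
    have "cmod (x j) = (\<Sum>i\<in>{j}. cmod (x i))" by simp
    also have "\<dots> \<le> nf d x" unfolding nf_def by (rule sum_mono2) (use j in auto)
    finally show "cmod (x j) \<le> nf d x" .
  qed auto
  also have "\<dots> = nf d z * nf d x" unfolding nf_def by (simp add: sum_distrib_right)
  finally show ?thesis .
qed

lemma outer_mult_vec: "outer d x y *\<^sub>v vec d x' = sp d y x' \<cdot>\<^sub>v vec d x"
  unfolding outer_def sp_def
  by (rule eq_vecI) (auto simp: scalar_prod_def row_def lessThan_atLeast0 sum_distrib_left mult_ac
      intro!: sum.cong)

lemma eig_bound: assumes A: "A \<in> carrier_mat d d" and v: "v \<in> carrier_vec d" and nz: "v \<noteq> 0\<^sub>v d"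
  and ev: "A *\<^sub>v v = c \<cdot>\<^sub>v v"
  shows "cmod c \<le> nrm A"
proof -
  from nz v obtain i0 where i0: "i0 < d" "v $ i0 \<noteq> 0" by (auto simp: vec_eq_iff)
  have fin: "finite (cmod ` (\<lambda>k. v $ k) ` {..<d})" by auto
  obtain i where i: "i < d" "\<And>k. k < d \<Longrightarrow> cmod (v $ k) \<le> cmod (v $ i)"
  proof -
    have ne: "(\<lambda>k. cmod (v $ k)) ` {..<d} \<noteq> {}" using i0 by auto
    define m where "m = Max ((\<lambda>k. cmod (v $ k)) ` {..<d})"
    have "m \<in> (\<lambda>k. cmod (v $ k)) ` {..<d}" unfolding m_def using ne by (intro Max_in) auto
    then obtain i where "i < d" "m = cmod (v $ i)" by auto
    moreover have "\<And>k. k < d \<Longrightarrow> cmod (v $ k) \<le> m" unfolding m_def by (intro Max_ge) auto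
    ultimately show ?thesis using that by auto
  qed
  have pos: "cmod (v $ i) > 0" using i(2)[OF i0(1)] i0(2) by auto
  have "cmod c * cmod (v $ i) = cmod ((A *\<^sub>v v) $ i)" using ev i v by (simp add: norm_mult)
  also have "\<dots> = cmod (\<Sum>k<d. A $$ (i,k) * v $ k)" using A v i
    by (simp add: scalar_prod_def row_def lessThan_atLeast0)
  also have "\<dots> \<le> (\<Sum>k<d. cmod (A $$ (i,k)) * cmod (v $ i))"
    by (intro order.trans[OF norm_sum] sum_mono) (auto simp: norm_mult intro!: mult_left_mono i(2))
  also have "\<dots> \<le> nrm A * cmod (v $ i)"
  proof -
    have "(\<Sum>k<d. cmod (A $$ (i,k))) = (\<Sum>i'\<in>{i}. \<Sum>k<d. cmod (A $$ (i',k)))" by simp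
    also have "\<dots> \<le> (\<Sum>i'<d. \<Sum>k<d. cmod (A $$ (i',k)))"
      by (rule sum_mono2) (use i in \<open>auto intro: sum_nonneg\<close>)
    finally have "(\<Sum>k<d. cmod (A $$ (i,k))) \<le> nrm A" using A unfolding nrm_def by simp
    thus ?thesis by (simp add: sum_distrib_right[symmetric] mult_right_mono)
  qed
  finally show ?thesis using pos by simp
qed

lemma fekete:
  fixes b :: "nat \<Rightarrow> real"
  assumes nn: "\<And>n. 0 \<le> b n" and sub: "\<And>m n. b (m + n) \<le> b m * b n"
  shows "(\<lambda>n. b n powr (1 / real n)) \<longlonglongrightarrow> Inf ((\<lambda>n. b n powr (1 / real n)) ` {1..})"
proof -
  define g where "g n = b n powr (1 / real n)" for n
  define L where "L = Inf (g ` {1..})"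
  have gnn: "0 \<le> g n" for n unfolding g_def by simp
  have bdd: "bdd_below (g ` {1..})" using gnn by (intro bdd_belowI[of _ 0]) auto
  have Lle: "L \<le> g n" if "n \<ge> 1" for n unfolding L_def using bdd that by (auto intro: cInf_lower)
  have L0: "0 \<le> L" unfolding L_def using gnn by (intro cInf_greatest) auto
  have "g \<longlonglongrightarrow> L"
  proof (rule order_tendstoI)
    fix a assume "a < L"
    show "eventually (\<lambda>n. a < g n) sequentially"
      using eventually_ge_at_top[of 1] by eventually_elim (use Lle \<open>a < L\<close> in force)
  next
    fix a assume aL: "L < a"
    define eps where "eps = a - L"
    have eps: "eps > 0" using aL eps_def by auto
    have "Inf (g ` {1..}) < L + eps / 2" using eps L_def by auto
    then obtain m where m: "m \<ge> 1" "g m < L + eps / 2" using cInf_lessD[of "g ` {1..}"] by auto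
    show "eventually (\<lambda>n. g n < a) sequentially"
    proof (cases "b m = 0")
      case True
      have "g n < a" if "n \<ge> m" for n
      proof -
        have "b n = b (m + (n - m))" using that by simp
        also have "\<dots> \<le> b m * b (n - m)" by (rule sub)
        finally have "b n = 0" using True nn[of n] by simp
        thus ?thesis using aL L0 unfolding g_def by simp
      qed
      thus ?thesis using eventually_ge_at_top[of m] by (metis (mono_tags, lifting) eventually_mono)
    next
      case False
      hence bm: "b m > 0" using nn[of m] by auto
      define \<beta> where "\<beta> = g m"
      have \<beta>: "\<beta> > 0" unfolding \<beta>_def g_def using bm by simp
      have \<beta>m: "\<beta> ^ m = b m" unfolding \<beta>_def g_def using bm m
        by (simp add: powr_realpow[symmetric] powr_powr)
      define h where "h r = (if r = 0 then 1 else b r)" for r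
      have hnn: "0 \<le> h r" for r unfolding h_def using nn by auto
      have step: "b (Suc q * m + r) \<le> b m ^ Suc q * h r" for q r
      proof (induction q)
        case 0
        then show ?case using sub[of m r] bm unfolding h_def by auto
      next
        case (Suc q)
        have "b (Suc (Suc q) * m + r) = b (m + (Suc q * m + r))" by (simp add: algebra_simps)
        also have "\<dots> \<le> b m * b (Suc q * m + r)" by (rule sub)
        also have "\<dots> \<le> b m * (b m ^ Suc q * h r)" using Suc bm by (intro mult_left_mono) auto
        finally show ?case by (simp add: algebra_simps)
      qed
      define C where "C = (\<Sum>r<m. h r) + 1"
      have hC: "h r \<le> C" if "r < m" for r
      proof -
        have "h r = (\<Sum>r'\<in>{r}. h r')" by simp
        also have "\<dots> \<le> (\<Sum>r'<m. h r')" by (rule sum_mono2) (use that hnn in auto)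
        finally show ?thesis unfolding C_def by simp
      qed
      have C0: "C > 0" unfolding C_def using hnn by (simp add: add_nonneg_pos sum_nonneg)
      define K where "K = (max 1 (1 / \<beta>)) ^ m"
      have K1: "K \<ge> 1" unfolding K_def by simp
      have bound: "b n \<le> \<beta> ^ n * (K * C)" if "n \<ge> m" for n
      proof -
        define q where "q = n div m"
        define r where "r = n mod m"
        have r: "r < m" unfolding r_def using m by simp
        have q: "q \<ge> 1" unfolding q_def using that m by (simp add: div_greater_zero_iff Suc_le_eq)
        have n: "n = m * q + r" unfolding q_def r_def by simp
        have sq: "Suc (q - 1) = q" using q by simp
        have st: "b (q * m + r) \<le> b m ^ q * h r" using step[of "q - 1" r] unfolding sq .
        have "b n \<le> b m ^ q * h r" using st n by (simp add: mult.commute)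
        also have "\<dots> \<le> b m ^ q * C" using hC[OF r] bm by (intro mult_left_mono) auto
        also have "b m ^ q = \<beta> ^ (m * q)" unfolding power_mult \<beta>m ..
        also have "\<beta> ^ (m * q) = \<beta> ^ n * (1 / \<beta>) ^ r"
        proof -
          have e: "\<beta> ^ r * (1 / \<beta>) ^ r = 1" unfolding power_mult_distrib[symmetric] using \<beta> by simp
          have "\<beta> ^ (m * q) = \<beta> ^ (m * q) * (\<beta> ^ r * (1 / \<beta>) ^ r)" unfolding e by simp
          also have "\<dots> = (\<beta> ^ (m * q) * \<beta> ^ r) * (1 / \<beta>) ^ r" by (simp only: mult.assoc)
          also have "\<beta> ^ (m * q) * \<beta> ^ r = \<beta> ^ n" unfolding n power_add ..
          finally show ?thesis .
        qed
        also have "(1 / \<beta>) ^ r \<le> K"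
        proof -
          have "(1 / \<beta>) ^ r \<le> (max 1 (1 / \<beta>)) ^ r" using \<beta> by (intro power_mono) auto
          also have "\<dots> \<le> (max 1 (1 / \<beta>)) ^ m" using r by (intro power_increasing) auto
          finally show ?thesis unfolding K_def .
        qed
        hence "\<beta> ^ n * (1 / \<beta>) ^ r * C \<le> \<beta> ^ n * K * C" using \<beta> C0
          by (intro mult_right_mono mult_left_mono) auto
        finally show ?thesis by (simp add: mult.assoc)
      qed
      have gle: "g n \<le> \<beta> * (K * C) powr (1 / real n)" if "n \<ge> m" for n
      proof -
        have n1: "n \<ge> 1" using that m by simp
        have "g n \<le> (\<beta> ^ n * (K * C)) powr (1 / real n)" unfolding g_def
          using bound[OF that] nn by (intro powr_mono2) auto
        also have "\<dots> = (\<beta> ^ n) powr (1 / real n) * (K * C) powr (1 / real n)"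
          using \<beta> K1 C0 by (intro powr_mult)
        also have "(\<beta> ^ n) powr (1 / real n) = \<beta>"
          using \<beta> n1 by (simp add: powr_realpow[symmetric] powr_powr)
        finally show ?thesis .
      qed
      have "(\<lambda>n. \<beta> * (K * C) powr (1 / real n)) \<longlonglongrightarrow> \<beta> * (K * C) powr 0"
        using K1 C0 by (intro tendsto_intros lim_1_over_n) auto
      hence "(\<lambda>n. \<beta> * (K * C) powr (1 / real n)) \<longlonglongrightarrow> \<beta>" using K1 C0 by simp
      moreover have "\<beta> < a" using m(2) aL unfolding \<beta>_def eps_def by (auto simp: field_simps)
      ultimately have "eventually (\<lambda>n. \<beta> * (K * C) powr (1 / real n) < a) sequentially"
        by (rule order_tendstoD)
      thus ?thesis using eventually_ge_at_top[of m]
        by eventually_elim (use gle in force)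
    qed
  qed
  thus ?thesis unfolding g_def L_def .
qed

definition wds :: "'a set \<Rightarrow> nat \<Rightarrow> 'a list set" where
  "wds S n = {ws. length ws = n \<and> set ws \<subseteq> S}"
definition bb :: "nat \<Rightarrow> complex mat set \<Rightarrow> nat \<Rightarrow> real" where
  "bb d S n = Max ((\<lambda>ws. nrm (mat_list_prod d ws)) ` wds S n)"
definition gg :: "nat \<Rightarrow> complex mat set \<Rightarrow> nat \<Rightarrow> real" where
  "gg d S n = bb d S n powr (1 / real n)"
definition LL :: "nat \<Rightarrow> complex mat set \<Rightarrow> real" where
  "LL d S = Inf (gg d S ` {1..})"

lemma wds_finite: "finite S \<Longrightarrow> finite (wds S n)"
  unfolding wds_def using finite_lists_length_eq[of S n] by (simp add: conj_commute)
lemma wds_ne: "S \<noteq> {} \<Longrightarrow> wds S n \<noteq> {}"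
  unfolding wds_def by (auto intro!: exI[of _ "replicate n (SOME x. x \<in> S)"] some_in_eq[THEN iffD2])

lemma fnorm_nonneg: "0 \<le> mat_fnorm M"
  unfolding mat_fnorm_def by (auto intro!: sum_nonneg)

lemma bb_ge: "finite S \<Longrightarrow> ws \<in> wds S n \<Longrightarrow> nrm (mat_list_prod d ws) \<le> bb d S n"
  unfolding bb_def by (intro Max_ge) (auto simp: wds_finite)
lemma bb_attained: "finite S \<Longrightarrow> S \<noteq> {} \<Longrightarrow> \<exists>ws\<in>wds S n. bb d S n = nrm (mat_list_prod d ws)"
proof -
  assume "finite S" "S \<noteq> {}"
  hence "bb d S n \<in> (\<lambda>ws. nrm (mat_list_prod d ws)) ` wds S n"
    unfolding bb_def by (intro Max_in) (auto simp: wds_finite wds_ne)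
  thus ?thesis by auto
qed
lemma bb_nonneg: "finite S \<Longrightarrow> S \<noteq> {} \<Longrightarrow> 0 \<le> bb d S n"
proof -
  assume a: "finite S" "S \<noteq> {}"
  obtain ws where "bb d S n = nrm (mat_list_prod d ws)" using bb_attained[OF a, of n d] by blast
  thus ?thesis using nrm_nonneg by simp
qed

lemma bb_mult: assumes fin: "finite S" and ne: "S \<noteq> {}" and S: "S \<subseteq> carrier_mat d d"
  shows "bb d S (m + n) \<le> bb d S m * bb d S n"
proof -
  obtain ws where ws: "ws \<in> wds S (m + n)" "bb d S (m + n) = nrm (mat_list_prod d ws)"
    using bb_attained[OF fin ne] by blast
  have w1: "take m ws \<in> wds S m" and w2: "drop m ws \<in> wds S n" using ws(1) unfolding wds_def
    by (auto dest: in_set_takeD in_set_dropD)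
  have c1: "set (take m ws) \<subseteq> carrier_mat d d" and c2: "set (drop m ws) \<subseteq> carrier_mat d d"
    using w1 w2 S unfolding wds_def by auto
  have "mat_list_prod d ws = mat_list_prod d (take m ws) * mat_list_prod d (drop m ws)"
    using pr_append[OF c1 c2] by simp
  hence "bb d S (m + n) \<le> nrm (mat_list_prod d (take m ws)) * nrm (mat_list_prod d (drop m ws))"
    using ws(2) nrm_mult pr_carrier[OF c1] pr_carrier[OF c2] by simp
  also have "\<dots> \<le> bb d S m * bb d S n"
    by (intro mult_mono bb_ge[OF fin] w1 w2 nrm_nonneg bb_nonneg[OF fin ne])
  finally show ?thesis .
qed

lemma gg_tendsto: assumes fin: "finite S" and ne: "S \<noteq> {}" and S: "S \<subseteq> carrier_mat d d"
  shows "gg d S \<longlonglongrightarrow> LL d S"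
  unfolding gg_def[abs_def] LL_def gg_def
  by (rule fekete) (use bb_nonneg[OF fin ne] bb_mult[OF fin ne S] in auto)

lemma LL_nonneg: "0 \<le> LL d S"
  unfolding LL_def gg_def by (intro cInf_greatest) auto

lemma LL_le: "finite S \<Longrightarrow> S \<noteq> {} \<Longrightarrow> n \<ge> 1 \<Longrightarrow> LL d S \<le> gg d S n"
  unfolding LL_def by (intro cInf_lower) (auto intro!: bdd_belowI[of _ 0] simp: gg_def)

lemma jsr_eq: assumes d: "0 < d" and fin: "finite S" and ne: "S \<noteq> {}" and S: "S \<subseteq> carrier_mat d d"
  shows "jsr d S = LL d S"
proof -
  define f where "f n = (SUP ws \<in> {ws. length ws = n \<and> set ws \<subseteq> S}.
                          mat_fnorm (mat_list_prod d ws) powr (1 / real n))" for n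
  define dd where "dd = real d * real d"
  have dd: "dd > 0" unfolding dd_def using d by simp
  have up: "f n \<le> gg d S n" for n
    unfolding f_def gg_def
  proof (rule cSUP_least)
    show "{ws. length ws = n \<and> set ws \<subseteq> S} \<noteq> {}" using wds_ne[OF ne] unfolding wds_def .
    fix ws assume ws: "ws \<in> {ws. length ws = n \<and> set ws \<subseteq> S}"
    show "mat_fnorm (mat_list_prod d ws) powr (1 / real n) \<le> bb d S n powr (1 / real n)"
      using fnorm_le_nrm[of "mat_list_prod d ws"] bb_ge[OF fin, of ws n d] ws fnorm_nonneg unfolding wds_def
      by (intro powr_mono2) auto
  qed
  have lo: "(bb d S n / dd) powr (1 / real n) \<le> f n" for n
  proof -
    obtain ws where ws: "ws \<in> wds S n" "bb d S n = nrm (mat_list_prod d ws)"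
      using bb_attained[OF fin ne] by blast
    have c: "mat_list_prod d ws \<in> carrier_mat d d" using ws S pr_carrier unfolding wds_def by auto
    have "bb d S n / dd \<le> mat_fnorm (mat_list_prod d ws)"
      using ws(2) nrm_le_fnorm[OF c] dd unfolding dd_def by (simp add: divide_le_eq mult.commute)
    hence "(bb d S n / dd) powr (1 / real n) \<le> mat_fnorm (mat_list_prod d ws) powr (1 / real n)"
      using bb_nonneg[OF fin ne] dd by (intro powr_mono2) auto
    also have "\<dots> \<le> f n" unfolding f_def
      by (rule cSUP_upper) (use ws wds_finite[OF fin, of n] in \<open>auto simp: wds_def\<close>)
    finally show ?thesis .
  qed
  have lo_eq: "(bb d S n / dd) powr (1 / real n) = gg d S n / dd powr (1 / real n)" for n
    unfolding gg_def using bb_nonneg[OF fin ne] dd by (simp add: powr_divide)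
  have "(\<lambda>n. gg d S n / dd powr (1 / real n)) \<longlonglongrightarrow> LL d S / dd powr 0"
    using dd by (intro tendsto_intros gg_tendsto[OF fin ne S] lim_1_over_n) auto
  hence l1: "(\<lambda>n. (bb d S n / dd) powr (1 / real n)) \<longlonglongrightarrow> LL d S" using lo_eq dd by simp
  have "f \<longlonglongrightarrow> LL d S"
    by (rule tendsto_sandwich[OF _ _ l1 gg_tendsto[OF fin ne S]]) (use lo up in auto)
  hence "lim f = LL d S" by (rule limI)
  thus ?thesis unfolding jsr_def f_def .
qed

fun om :: "('v \<Rightarrow> 'v \<Rightarrow> complex) \<Rightarrow> 'v list \<Rightarrow> complex" where
  "om e [] = 1"
| "om e [a] = 1"
| "om e (a # b # rest) = e a b * om e (b # rest)"

definition cw :: "('v \<Rightarrow> 'v \<Rightarrow> complex) \<Rightarrow> 'v list \<Rightarrow> complex" where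
  "cw e ps = om e (ps @ [hd ps])"

definition lens :: "('v \<Rightarrow> nat) \<Rightarrow> 'v list \<Rightarrow> nat" where
  "lens lf ps = sum_list (map lf ps)"

lemma om_Cons: "om e (a # l) = (if l = [] then 1 else e a (hd l) * om e l)"
  by (cases l) auto

lemma om_append: "om e (xs @ [y]) * om e (y # ys) = om e (xs @ y # ys)"
proof (induction xs)
  case Nil
  then show ?case by simp
next
  case (Cons a xs)
  have "om e ((a#xs) @ [y]) = e a (hd (xs @ y # ys)) * om e (xs @ [y])" by (simp add: om_Cons hd_append)
  moreover have "om e ((a#xs) @ y # ys) = e a (hd (xs @ y # ys)) * om e (xs @ y # ys)" by (simp add: om_Cons)
  ultimately show ?case using Cons.IH by (simp add: mult.assoc)
qed

lemma om_last_key: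
  assumes ek: "\<And>a b b'. key b = key b' \<Longrightarrow> e a b = e a b'" and k: "key y = key y'"
  shows "om e (xs @ [y]) = om e (xs @ [y'])"
proof (induction xs)
  case Nil
  then show ?case by simp
next
  case (Cons a xs)
  then show ?case using ek[OF k] by (cases xs) (auto simp: om_Cons)
qed

lemma om_split:
  assumes ek: "\<And>a b b'. key b = key b' \<Longrightarrow> e a b = e a b'" and k: "key y = key y'"
  shows "om e (xs @ y # ys @ y' # zs) = cw e (y # ys) * om e (xs @ y' # zs)"
proof -
  have "om e (xs @ y # ys @ y' # zs) = om e (xs @ [y]) * om e (y # ys @ y' # zs)"
    using om_append[of e xs y "ys @ y' # zs"] by simp
  also have "om e (y # ys @ y' # zs) = om e ((y # ys) @ [y']) * om e (y' # zs)"
    using om_append[of e "y # ys" y' zs] by simp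
  also have "om e ((y # ys) @ [y']) = cw e (y # ys)"
    unfolding cw_def using om_last_key[where key=key and e=e, OF ek k[symmetric], of "y # ys"] by simp
  also have "om e (xs @ [y]) = om e (xs @ [y'])" using om_last_key[where key=key and e=e, OF ek k] .
  finally show ?thesis using om_append[of e xs y' zs] by (simp add: mult_ac)
qed

lemma cw_split:
  assumes ek: "\<And>a b b'. key b = key b' \<Longrightarrow> e a b = e a b'" and k: "key y = key y'"
  shows "cw e (xs @ y # ys @ y' # zs) = cw e (y # ys) * cw e (xs @ y' # zs)"
proof -
  let ?h = "hd (xs @ y # ys @ y' # zs)"
  have "cw e (xs @ y # ys @ y' # zs) = om e (xs @ y # ys @ y' # (zs @ [?h]))"
    unfolding cw_def by simp
  also have "\<dots> = cw e (y # ys) * om e (xs @ y' # zs @ [?h])" by (rule om_split[where key=key and e=e, OF ek k])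
  also have "om e (xs @ y' # zs @ [?h]) = cw e (xs @ y' # zs)"
  proof (cases xs)
    case Nil
    have "om e ((y' # zs) @ [y]) = om e ((y' # zs) @ [y'])" using om_last_key[where key=key and e=e, OF ek k] .
    thus ?thesis using Nil unfolding cw_def by simp
  next
    case (Cons a l)
    thus ?thesis unfolding cw_def by simp
  qed
  finally show ?thesis .
qed

lemma nondistinct_decomp:
  "\<not> distinct (map key ps) \<Longrightarrow> \<exists>xs y ys y' zs. ps = xs @ y # ys @ y' # zs \<and> key y = key y'"
proof (induction ps)
  case Nil
  then show ?case by simp
next
  case (Cons a ps)
  show ?case
  proof (cases "distinct (map key ps)")
    case True
    with Cons.prems have "key a \<in> key ` set ps" by auto
    then obtain y' where y': "y' \<in> set ps" "key a = key y'" by auto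
    then obtain ys zs where "ps = ys @ y' # zs" by (meson split_list)
    thus ?thesis using y' by (intro exI[of _ "[]"]) auto
  next
    case False
    then obtain xs y ys y' zs where "ps = xs @ y # ys @ y' # zs" "key y = key y'"
      using Cons.IH by blast
    thus ?thesis by (intro exI[of _ "a # xs"]) auto
  qed
qed

lemma lens_append[simp]: "lens lf (xs @ ys) = lens lf xs + lens lf ys"
  unfolding lens_def by simp
lemma lens_Cons[simp]: "lens lf (a # ys) = lf a + lens lf ys"
  unfolding lens_def by simp
lemma lens_Nil[simp]: "lens lf [] = 0"
  unfolding lens_def by simp

lemma cycle_all:
  fixes T :: real
  assumes ek: "\<And>a b b'. key b = key b' \<Longrightarrow> e a b = e a b'" and T: "T > 0"
    and good: "\<And>ps. ps \<noteq> [] \<Longrightarrow> set ps \<subseteq> V \<Longrightarrow> distinct (map key ps) \<Longrightarrow> cmod (cw e ps) \<le> T ^ lens lf ps"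
  shows "ps \<noteq> [] \<Longrightarrow> set ps \<subseteq> V \<Longrightarrow> cmod (cw e ps) \<le> T ^ lens lf ps"
proof (induction "length ps" arbitrary: ps rule: less_induct)
  case less
  show ?case
  proof (cases "distinct (map key ps)")
    case True
    then show ?thesis using good less.prems by blast
  next
    case False
    then obtain xs y ys y' zs where ps: "ps = xs @ y # ys @ y' # zs" and k: "key y = key y'"
      using nondistinct_decomp by blast
    have 1: "cmod (cw e (y # ys)) \<le> T ^ lens lf (y # ys)"
      by (rule less.hyps) (use ps less.prems in auto)
    have 2: "cmod (cw e (xs @ y' # zs)) \<le> T ^ lens lf (xs @ y' # zs)"
      by (rule less.hyps) (use ps less.prems in auto)
    have "cw e ps = cw e (y # ys) * cw e (xs @ y' # zs)"
      using cw_split[where key=key and e=e, OF ek k] ps by simp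
    hence "cmod (cw e ps) = cmod (cw e (y # ys)) * cmod (cw e (xs @ y' # zs))"
      by (simp add: norm_mult)
    also have "\<dots> \<le> T ^ lens lf (y # ys) * T ^ lens lf (xs @ y' # zs)"
      by (rule mult_mono[OF 1 2]) (use T in auto)
    also have "\<dots> = T ^ lens lf ps" unfolding ps by (simp add: power_add[symmetric] algebra_simps)
    finally show ?thesis .
  qed
qed

lemma path_bound:
  fixes T D :: real
  assumes T: "T > 0" and edge: "\<And>a b. a \<in> V \<Longrightarrow> b \<in> V \<Longrightarrow> cmod (e a b) \<le> D * T ^ lf a"
  shows "ps \<noteq> [] \<Longrightarrow> set ps \<subseteq> V \<Longrightarrow>
     cmod (om e ps) * T ^ lf (last ps) \<le> (max 1 D) ^ length ps * T ^ lens lf ps"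
proof (induction ps)
  case (Cons a rest0)
  show ?case
  proof (cases rest0)
    case Nil
    then show ?thesis using T by simp
  next
    case (Cons b rest)
    note 3 = Cons.prems[unfolded Cons]
    have ih: "cmod (om e (b # rest)) * T ^ lf (last (b # rest)) \<le> (max 1 D) ^ length (b # rest) * T ^ lens lf (b # rest)"
      using Cons.IH Cons.prems unfolding Cons by auto
    have ed: "cmod (e a b) \<le> max 1 D * T ^ lf a"
    proof -
      have "D * T ^ lf a \<le> max 1 D * T ^ lf a" using T by (intro mult_right_mono) auto
      moreover have "cmod (e a b) \<le> D * T ^ lf a" using edge[of a b] 3(2) by simp
      ultimately show ?thesis by linarith
    qed
    have "cmod (om e (a # b # rest)) * T ^ lf (last (a # b # rest))
        = cmod (e a b) * (cmod (om e (b # rest)) * T ^ lf (last (b # rest)))" by (simp add: norm_mult)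
    also have "\<dots> \<le> (max 1 D * T ^ lf a) * ((max 1 D) ^ length (b # rest) * T ^ lens lf (b # rest))"
      by (rule mult_mono[OF ed ih]) (use T in auto)
    also have "\<dots> = (max 1 D) ^ length (a # b # rest) * T ^ lens lf (a # b # rest)"
      by (simp add: power_add algebra_simps)
    finally show ?thesis unfolding Cons .
  qed
qed simp

lemma path_all:
  fixes T D :: real
  assumes ek: "\<And>a b b'. key b = key b' \<Longrightarrow> e a b = e a b'" and T: "T > 0"
    and edge: "\<And>a b. a \<in> V \<Longrightarrow> b \<in> V \<Longrightarrow> cmod (e a b) \<le> D * T ^ lf a"
    and cyc: "\<And>ps. ps \<noteq> [] \<Longrightarrow> set ps \<subseteq> V \<Longrightarrow> cmod (cw e ps) \<le> T ^ lens lf ps"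
    and fin: "finite (key ` V)"
  shows "ps \<noteq> [] \<Longrightarrow> set ps \<subseteq> V \<Longrightarrow>
     cmod (om e ps) * T ^ lf (last ps) \<le> (max 1 D) ^ card (key ` V) * T ^ lens lf ps"
proof (induction "length ps" arbitrary: ps rule: less_induct)
  case less
  show ?case
  proof (cases "distinct (map key ps)")
    case True
    have "length ps = card (set (map key ps))" using distinct_card[OF True] by simp
    also have "\<dots> \<le> card (key ` V)" using less.prems fin by (intro card_mono) auto
    finally have len: "length ps \<le> card (key ` V)" .
    have "cmod (om e ps) * T ^ lf (last ps) \<le> (max 1 D) ^ length ps * T ^ lens lf ps"
      by (rule path_bound[OF T edge less.prems]) auto
    also have "\<dots> \<le> (max 1 D) ^ card (key ` V) * T ^ lens lf ps"
      using T len by (intro mult_right_mono power_increasing) auto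
    finally show ?thesis .
  next
    case False
    then obtain xs y ys y' zs where ps: "ps = xs @ y # ys @ y' # zs" and k: "key y = key y'"
      using nondistinct_decomp by blast
    have 1: "cmod (cw e (y # ys)) \<le> T ^ lens lf (y # ys)"
      by (rule cyc) (use ps less.prems in auto)
    have 2: "cmod (om e (xs @ y' # zs)) * T ^ lf (last (xs @ y' # zs)) \<le> (max 1 D) ^ card (key ` V) * T ^ lens lf (xs @ y' # zs)"
      by (rule less.hyps) (use ps less.prems in auto)
    have lst: "last ps = last (xs @ y' # zs)" unfolding ps by (cases zs) auto
    have "cmod (om e ps) * T ^ lf (last ps) = cmod (cw e (y # ys)) * (cmod (om e (xs @ y' # zs)) * T ^ lf (last (xs @ y' # zs)))"
    proof -
      have "om e ps = cw e (y # ys) * om e (xs @ y' # zs)"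
        using om_split[where key=key and e=e, OF ek k] ps by simp
      thus ?thesis unfolding lst by (simp add: norm_mult)
    qed
    also have "\<dots> \<le> T ^ lens lf (y # ys) * ((max 1 D) ^ card (key ` V) * T ^ lens lf (xs @ y' # zs))"
      by (rule mult_mono[OF 1 2]) (use T in auto)
    also have "\<dots> = (max 1 D) ^ card (key ` V) * T ^ lens lf ps" unfolding ps by (simp add: power_add algebra_simps)
    finally show ?thesis .
  qed
qed

lemma cw_crude:
  fixes T D :: real
  assumes T: "T > 0" and edge: "\<And>a b. a \<in> V \<Longrightarrow> b \<in> V \<Longrightarrow> cmod (e a b) \<le> D * T ^ lf a"
    and ne: "ps \<noteq> []" and V: "set ps \<subseteq> V"
  shows "cmod (cw e ps) \<le> (max 1 D) ^ Suc (length ps) * T ^ lens lf ps"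
proof -
  have "cmod (om e (ps @ [hd ps])) * T ^ lf (last (ps @ [hd ps])) \<le>
        (max 1 D) ^ length (ps @ [hd ps]) * T ^ lens lf (ps @ [hd ps])"
    by (rule path_bound[OF T edge]) (use ne V in auto)
  hence "cmod (cw e ps) * T ^ lf (hd ps) \<le> ((max 1 D) ^ Suc (length ps) * T ^ lens lf ps) * T ^ lf (hd ps)"
    unfolding cw_def by (simp add: power_add algebra_simps)
  thus ?thesis using T by simp
qed

lemma rank_le1_outer_mat:
  assumes M: "M \<in> carrier_mat d d" and r: "mat_rank d M \<le> 1"
  shows "\<exists>x y. M = outer d x y"
proof -
  from vec_space.rank_le1_outer[OF M r[unfolded mat_rank_def]]
  obtain x y where x: "x \<in> carrier_vec d" and e: "\<forall>i<d. \<forall>j<d. M $$ (i,j) = x $ i * y j" by blast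
  have "M = outer d (\<lambda>i. x $ i) y" unfolding outer_def using M e by (intro eq_matI) auto
  thus ?thesis by blast
qed

lemma smult_smult_mat': "a \<cdot>\<^sub>m (b \<cdot>\<^sub>m M) = (a * b) \<cdot>\<^sub>m (M :: complex mat)"
  by (rule eq_matI) auto

lemma one_smult_mat'[simp]: "1 \<cdot>\<^sub>m (M :: complex mat) = M"
  by (rule eq_matI) auto

lemma smult_mat_vec': "dim_vec v = dim_col M \<Longrightarrow> ((c :: complex) \<cdot>\<^sub>m M) *\<^sub>v v = c \<cdot>\<^sub>v (M *\<^sub>v v)"
  by (rule eq_vecI) (auto simp: scalar_prod_def sum_distrib_left mult_ac row_def intro!: sum.cong)

lemma smult_smult_vec': "(a :: complex) \<cdot>\<^sub>v (b \<cdot>\<^sub>v v) = (a * b) \<cdot>\<^sub>v v"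
  by (rule eq_vecI) auto

lemma spec_nonneg: assumes "P \<in> carrier_mat d d" "0 < d" shows "0 \<le> spectral_radius P"
  using spectral_radius_mem_max(1)[OF assms] by auto

lemma count_distinct: "distinct xs \<Longrightarrow> count_list xs x \<le> 1"
  by (induction xs) (auto simp: count_list_0_iff)

locale jset =
  fixes d :: nat and A :: "complex mat set" and xf yf :: "complex mat \<Rightarrow> nat \<Rightarrow> complex"
  assumes d: "0 < d" and fin: "finite A" and ne: "A \<noteq> {}" and car: "A \<subseteq> carrier_mat d d"
    and dec: "\<And>M. M \<in> A \<Longrightarrow> mat_rank d M \<le> 1 \<Longrightarrow> M = outer d (xf M) (yf M)"
begin

abbreviation pr where "pr \<equiv> mat_list_prod d"

definition Os where "Os = {M \<in> A. mat_rank d M \<le> 1}"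
definition Rs where "Rs = {M \<in> A. 2 \<le> mat_rank d M}"
definition V where "V = {(M, W). M \<in> Os \<and> set W \<subseteq> Rs}"
definition word :: "(complex mat \<times> complex mat list) list \<Rightarrow> complex mat list" where
  "word ps = concat (map (\<lambda>(M, W). M # W) ps)"
definition ed :: "complex mat \<times> complex mat list \<Rightarrow> complex mat \<times> complex mat list \<Rightarrow> complex" where
  "ed a b = sp d (rowmul d (yf (fst a)) (pr (snd a))) (xf (fst b))"
definition lf :: "complex mat \<times> complex mat list \<Rightarrow> nat" where
  "lf a = Suc (length (snd a))"

lemma OR: "A = Os \<union> Rs" "Os \<inter> Rs = {}" unfolding Os_def Rs_def by auto
lemma finOs: "finite Os" unfolding Os_def using fin by auto
lemma finRs: "finite Rs" unfolding Rs_def using fin by auto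

lemma word_Nil[simp]: "word [] = []" unfolding word_def by simp
lemma word_Cons[simp]: "word ((M, W) # ps) = M # W @ word ps" unfolding word_def by simp

lemma word_A: "set ps \<subseteq> V \<Longrightarrow> set (word ps) \<subseteq> A"
  by (induction ps) (auto simp: V_def Os_def Rs_def)

lemma len_word: "lens lf ps = length (word ps)"
  by (induction ps) (auto simp: lf_def)

lemma ed_key: "fst b = fst b' \<Longrightarrow> ed a b = ed a b'"
  unfolding ed_def by simp

lemma Acar: "set ws \<subseteq> A \<Longrightarrow> set ws \<subseteq> carrier_mat d d" using car by auto

lemma pr_word:
  "ps \<noteq> [] \<Longrightarrow> set ps \<subseteq> V \<Longrightarrow> pr (word ps) = om ed ps \<cdot>\<^sub>m
     outer d (xf (fst (hd ps))) (rowmul d (yf (fst (last ps))) (pr (snd (last ps))))"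
proof (induction ps)
  case (Cons a rest)
  obtain M W where a: "a = (M, W)" by fastforce
  have M: "M \<in> A" "mat_rank d M \<le> 1" and W: "set W \<subseteq> A" using Cons.prems a
    by (auto simp: V_def Os_def Rs_def)
  have Wc: "pr W \<in> carrier_mat d d" using W car by (intro pr_carrier) auto
  have Mo: "M * pr W = outer d (xf M) (rowmul d (yf M) (pr W))"
    using dec[OF M] outer_mult[OF Wc] by metis
  show ?case
  proof (cases rest)
    case Nil
    have "pr (word (a # rest)) = M * pr W" using Nil a Wc M car
      by (simp add: pr_append[OF _ Acar[OF W]])
    thus ?thesis using Mo Nil a by (simp add: smult_smult_mat')
  next
    case (Cons b rest')
    have rc: "set (word rest) \<subseteq> carrier_mat d d" using Cons.prems word_A[of rest] car by auto
    have ih: "pr (word rest) = om ed rest \<cdot>\<^sub>m outer d (xf (fst (hd rest))) (rowmul d (yf (fst (last rest))) (pr (snd (last rest))))"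
      using Cons.IH Cons.prems \<open>rest = b # rest'\<close> by auto
    let ?z = "rowmul d (yf (fst (last rest))) (pr (snd (last rest)))"
    have "pr (word (a # rest)) = M * (pr W * pr (word rest))"
      using a pr_append[OF Acar[OF W] rc] by simp
    also have "\<dots> = (M * pr W) * pr (word rest)" using M car Wc pr_carrier[OF rc]
      by (subst assoc_mult_mat[of M d d _ d _ d]) auto
    also have "\<dots> = outer d (xf M) (rowmul d (yf M) (pr W)) * (om ed rest \<cdot>\<^sub>m outer d (xf (fst b)) ?z)"
      unfolding Mo ih using Cons by simp
    also have "\<dots> = om ed rest \<cdot>\<^sub>m (sp d (rowmul d (yf M) (pr W)) (xf (fst b)) \<cdot>\<^sub>m outer d (xf M) ?z)"
      by (subst mult_smult_distrib[of _ d d _ d]) (auto simp: outer_mult_outer)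
    also have "\<dots> = om ed (a # rest) \<cdot>\<^sub>m outer d (xf (fst (hd (a # rest)))) (rowmul d (yf (fst (last (a # rest)))) (pr (snd (last (a # rest)))))"
      using Cons a by (simp add: smult_smult_mat' ed_def mult.commute)
    finally show ?thesis .
  qed
qed simp

lemma om_snoc: "ps \<noteq> [] \<Longrightarrow> om e (ps @ [b]) = om e ps * e (last ps) b"
proof -
  assume "ps \<noteq> []"
  then have ps: "ps = butlast ps @ [last ps]" by simp
  have "om e (ps @ [b]) = om e (butlast ps @ [last ps]) * om e [last ps, b]"
    using om_append[of e "butlast ps" "last ps" "[b]"] ps by (metis append.assoc append_Cons append_Nil)
  also have "\<dots> = om e ps * e (last ps) b" using ps by simp
  finally show ?thesis .
qed

lemma cw_le_spec: assumes ne: "ps \<noteq> []" and V: "set ps \<subseteq> V"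
  shows "cmod (cw ed ps) \<le> spectral_radius (pr (word ps))"
proof -
  let ?x = "xf (fst (hd ps))"
  let ?z = "rowmul d (yf (fst (last ps))) (pr (snd (last ps)))"
  have Pc: "pr (word ps) \<in> carrier_mat d d" using word_A[OF V] car by (intro pr_carrier) auto
  have cw: "cw ed ps = om ed ps * sp d ?z ?x" unfolding cw_def om_snoc[OF ne] ed_def by simp
  have ev: "pr (word ps) *\<^sub>v vec d ?x = cw ed ps \<cdot>\<^sub>v vec d ?x"
    unfolding pr_word[OF ne V] cw by (subst smult_mat_vec') (auto simp: outer_def outer_mult_vec[unfolded outer_def] smult_smult_vec')
  show ?thesis
  proof (cases "vec d ?x = 0\<^sub>v d")
    case True
    hence "sp d ?z ?x = 0" unfolding sp_def by (auto simp: vec_eq_iff)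
    thus ?thesis using cw spec_nonneg[OF Pc d] by simp
  next
    case False
    hence "eigenvector (pr (word ps)) (vec d ?x) (cw ed ps)"
      unfolding eigenvector_def using ev Pc by auto
    hence "cw ed ps \<in> spectrum (pr (word ps))" unfolding spectrum_def eigenvalue_def by auto
    thus ?thesis using spectral_radius_mem_max(2)[OF Pc d] by auto
  qed
qed

lemma count_word: "set ps \<subseteq> V \<Longrightarrow> M \<notin> Rs \<Longrightarrow> count_list (word ps) M = count_list (map fst ps) M"
proof (induction ps)
  case (Cons a ps)
  obtain N W where a: "a = (N, W)" by fastforce
  have "set W \<subseteq> Rs" using Cons.prems a by (auto simp: V_def)
  hence "count_list W M = 0" using Cons.prems by (auto simp: count_list_0_iff)
  thus ?case using Cons a by auto
qed simp

lemma decomp: "set u \<subseteq> A \<Longrightarrow> \<exists>W0 ps. u = W0 @ word ps \<and> set W0 \<subseteq> Rs \<and> set ps \<subseteq> V"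
proof (induction u)
  case Nil
  show ?case by (intro exI[of _ "[]"]) auto
next
  case (Cons a u)
  then obtain W0 ps where u: "u = W0 @ word ps" "set W0 \<subseteq> Rs" "set ps \<subseteq> V" by auto
  show ?case
  proof (cases "a \<in> Rs")
    case True
    thus ?thesis using u by (intro exI[of _ "a # W0"] exI[of _ ps]) auto
  next
    case False
    hence "a \<in> Os" using Cons.prems OR by auto
    thus ?thesis using u by (intro exI[of _ "[]"] exI[of _ "(a, W0) # ps"]) (auto simp: V_def)
  qed
qed

definition X where "X = (\<Sum>M\<in>Os. nf d (xf M))"
definition Y where "Y = (\<Sum>M\<in>Os. nf d (yf M))"

lemma nfX: "M \<in> Os \<Longrightarrow> nf d (xf M) \<le> X"
  unfolding X_def using finOs by (intro member_le_sum) (auto simp: nf_nonneg)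
lemma nfY: "M \<in> Os \<Longrightarrow> nf d (yf M) \<le> Y"
  unfolding Y_def using finOs by (intro member_le_sum) (auto simp: nf_nonneg)
lemma X0: "0 \<le> X" unfolding X_def by (intro sum_nonneg) (auto simp: nf_nonneg)
lemma Y0: "0 \<le> Y" unfolding Y_def by (intro sum_nonneg) (auto simp: nf_nonneg)

lemma edge_bound:
  fixes CR r T :: real
  assumes CR: "\<And>W. set W \<subseteq> Rs \<Longrightarrow> nrm (pr W) \<le> CR * r ^ length W" and r: "0 < r" "r \<le> T"
    and a: "a \<in> V" and b: "b \<in> V"
  shows "cmod (ed a b) \<le> (X * Y * CR / T) * T ^ lf a"
proof -
  obtain M W where aa: "a = (M, W)" by fastforce
  have W: "set W \<subseteq> Rs" and M: "M \<in> Os" using a aa by (auto simp: V_def)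
  have Wc: "pr W \<in> carrier_mat d d" using W car OR by (intro pr_carrier) auto
  have bO: "fst b \<in> Os" using b by (auto simp: V_def)
  have CR0: "0 \<le> CR * r ^ length W" using CR[OF W] nrm_nonneg order.trans by blast
  have "cmod (ed a b) \<le> nf d (rowmul d (yf M) (pr W)) * nf d (xf (fst b))"
    unfolding ed_def aa using sp_bound by simp
  also have "\<dots> \<le> (nf d (yf M) * nrm (pr W)) * X"
    by (intro mult_mono nf_rowmul[OF Wc] nfX[OF bO]) (auto simp: nf_nonneg nrm_nonneg intro: mult_nonneg_nonneg)
  also have "\<dots> \<le> (Y * (CR * r ^ length W)) * X"
    by (intro mult_mono nfY[OF M] CR[OF W]) (auto simp: X0 Y0 nf_nonneg nrm_nonneg CR0)
  also have "\<dots> \<le> (Y * (CR * T ^ length W)) * X"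
  proof -
    have pos: "0 < r ^ length W" using r by simp
    have "CR \<ge> 0"
    proof (rule ccontr)
      assume "\<not> 0 \<le> CR"
      hence "CR * r ^ length W < 0" using pos by (simp add: mult_neg_pos)
      thus False using CR0 by simp
    qed
    moreover have "r ^ length W \<le> T ^ length W" using r by (intro power_mono) auto
    ultimately show ?thesis using X0 Y0 by (intro mult_right_mono mult_left_mono) auto
  qed
  also have "\<dots> = (X * Y * CR / T) * T ^ lf a" using r unfolding lf_def aa by (simp add: field_simps)
  finally show ?thesis .
qed

end

lemma pow_powr_inv: assumes "0 \<le> (b::real)" "n \<ge> 1" shows "(b powr (1 / real n)) ^ n = b"
proof (cases "b = 0")
  case True thus ?thesis using assms by simp
next
  case False
  hence b: "b > 0" using assms by simp
  have "(b powr (1 / real n)) ^ n = (b powr (1 / real n)) powr real n"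
    using b by (simp add: powr_realpow)
  also have "\<dots> = b" using assms b by (simp add: powr_powr)
  finally show ?thesis .
qed

lemma spec_le_LL:
  assumes d: "0 < d" and fin: "finite A" and ne: "A \<noteq> {}" and car: "A \<subseteq> carrier_mat d d"
    and wne: "ws \<noteq> []" and wA: "set ws \<subseteq> A"
  shows "spectral_radius (mat_list_prod d ws) powr (1 / real (length ws)) \<le> LL d A"
proof -
  define P where "P = mat_list_prod d ws"
  define m where "m = length ws"
  have m: "m \<ge> 1" unfolding m_def using wne by (cases ws) auto
  have wc: "set ws \<subseteq> carrier_mat d d" using wA car by auto
  have Pc: "P \<in> carrier_mat d d" unfolding P_def using pr_carrier[OF wc] .
  obtain lam where lam: "lam \<in> spectrum P" "cmod lam = spectral_radius P"
    using spectral_radius_mem_max(1)[OF Pc d] by auto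
  then obtain v where v: "eigenvector P v lam" unfolding spectrum_def eigenvalue_def by auto
  have vc: "v \<in> carrier_vec d" and vnz: "v \<noteq> 0\<^sub>v d" and Pv: "P *\<^sub>v v = lam \<cdot>\<^sub>v v"
    using v Pc unfolding eigenvector_def by auto
  have rc: "set (concat (replicate j ws)) \<subseteq> carrier_mat d d" for j using wc by auto
  have pw: "mat_list_prod d (concat (replicate j ws)) *\<^sub>v v = lam ^ j \<cdot>\<^sub>v v" for j
  proof (induction j)
    case 0
    then show ?case using vc by simp
  next
    case (Suc j)
    have "mat_list_prod d (concat (replicate (Suc j) ws)) = P * mat_list_prod d (concat (replicate j ws))"
      unfolding P_def using pr_append[OF wc rc[of j]] by simp
    hence "mat_list_prod d (concat (replicate (Suc j) ws)) *\<^sub>v v = P *\<^sub>v (lam ^ j \<cdot>\<^sub>v v)"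
      using Pc pr_carrier[OF rc[of j]] vc Suc by simp
    also have "\<dots> = lam ^ j \<cdot>\<^sub>v (lam \<cdot>\<^sub>v v)" using mult_mat_vec[OF Pc vc] Pv by simp
    also have "\<dots> = lam ^ Suc j \<cdot>\<^sub>v v" by (rule eq_vecI) auto
    finally show ?case .
  qed
  have bnd: "spectral_radius P powr (1 / real m) \<le> gg d A (m * j)" if j: "j \<ge> 1" for j
  proof -
    have "cmod (lam ^ j) \<le> nrm (mat_list_prod d (concat (replicate j ws)))"
      by (rule eig_bound[OF pr_carrier[OF rc] vc vnz pw])
    also have "\<dots> \<le> bb d A (m * j)"
      by (rule bb_ge[OF fin]) (use wA in \<open>auto simp: wds_def m_def length_concat sum_list_replicate\<close>)
    finally have le: "spectral_radius P ^ j \<le> bb d A (m * j)" using lam by (simp add: norm_power)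
    show ?thesis
    proof (cases "spectral_radius P = 0")
      case True
      thus ?thesis using m by (simp add: gg_def)
    next
      case False
      hence pos: "spectral_radius P > 0" using spec_nonneg[OF Pc d] by simp
      have mj: "real (m * j) > 0" using m j by simp
      have "spectral_radius P powr (1 / real m) = (spectral_radius P ^ j) powr (1 / real (m * j))"
        using pos j m by (simp add: powr_realpow[symmetric] powr_powr)
      also have "\<dots> \<le> bb d A (m * j) powr (1 / real (m * j))"
        using le pos by (intro powr_mono2) auto
      finally show ?thesis unfolding gg_def .
    qed
  qed
  have sm: "strict_mono (\<lambda>j. m * Suc j)" using m by (auto simp: strict_mono_def)
  have "(\<lambda>j. gg d A (m * Suc j)) \<longlonglongrightarrow> LL d A"
    using LIMSEQ_subseq_LIMSEQ[OF gg_tendsto[OF fin ne car] sm] by (simp add: o_def)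
  moreover have "\<forall>j\<ge>0. spectral_radius P powr (1 / real m) \<le> gg d A (m * Suc j)"
    using bnd[of "Suc _"] by auto
  ultimately have "spectral_radius P powr (1 / real m) \<le> LL d A"
    by (intro LIMSEQ_le_const) auto
  thus ?thesis unfolding P_def m_def .
qed

context jset begin

lemma R_bound:
  assumes hyp: "Rs = {} \<or> jsr d Rs < jsr d A" and s: "0 < LL d A"
  shows "\<exists>r CR. 0 < r \<and> r < LL d A \<and> 0 \<le> CR \<and> (\<forall>W. set W \<subseteq> Rs \<longrightarrow> nrm (pr W) \<le> CR * r ^ length W)"
proof (cases "Rs = {}")
  case True
  show ?thesis
    by (rule exI[of _ "LL d A / 2"], rule exI[of _ "real d"]) (use s True in \<open>auto simp: nrm_one\<close>)
next
  case False
  have Rc: "Rs \<subseteq> carrier_mat d d" using car OR by auto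
  have "jsr d Rs = LL d Rs" by (rule jsr_eq[OF d finRs False Rc])
  moreover have "jsr d A = LL d A" by (rule jsr_eq[OF d fin ne car])
  ultimately have lt: "LL d Rs < LL d A" using hyp False by simp
  define r where "r = (LL d Rs + LL d A) / 2"
  have r: "0 < r" "r < LL d A" "LL d Rs < r" unfolding r_def using lt LL_nonneg[of d Rs] by auto
  have "eventually (\<lambda>n. gg d Rs n < r) sequentially"
    by (rule order_tendstoD(2)[OF gg_tendsto[OF finRs False Rc] r(3)])
  then obtain N where N: "\<And>n. n \<ge> N \<Longrightarrow> gg d Rs n < r" by (auto simp: eventually_sequentially)
  define N' where "N' = max N 1"
  define CR where "CR = (\<Sum>n<N'. bb d Rs n / r ^ n) + 1"
  have terms: "0 \<le> bb d Rs n / r ^ n" for n using bb_nonneg[OF finRs False] r by simp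
  have CR1: "1 \<le> CR" unfolding CR_def using terms by (simp add: sum_nonneg)
  have "nrm (pr W) \<le> CR * r ^ length W" if W: "set W \<subseteq> Rs" for W
  proof -
    define n where "n = length W"
    have "nrm (pr W) \<le> bb d Rs n" using W unfolding n_def by (intro bb_ge[OF finRs]) (auto simp: wds_def)
    also have "bb d Rs n \<le> CR * r ^ n"
    proof (cases "n \<ge> N'")
      case True
      hence n1: "n \<ge> 1" "n \<ge> N" unfolding N'_def by auto
      have "bb d Rs n = (gg d Rs n) ^ n" unfolding gg_def
        using pow_powr_inv[OF bb_nonneg[OF finRs False] n1(1)] by simp
      also have "\<dots> \<le> r ^ n" using N[OF n1(2)] by (intro power_mono) (auto simp: gg_def)
      also have "\<dots> \<le> CR * r ^ n" using CR1 r by simp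
      finally show ?thesis .
    next
      case False
      have "bb d Rs n / r ^ n \<le> (\<Sum>n<N'. bb d Rs n / r ^ n)"
        using False terms by (intro member_le_sum) auto
      hence "bb d Rs n / r ^ n \<le> CR" unfolding CR_def by simp
      thus ?thesis using r by (simp add: divide_le_eq)
    qed
    finally show ?thesis unfolding n_def .
  qed
  thus ?thesis using r CR1 by (intro exI[of _ r] exI[of _ CR]) auto
qed

end

context jset begin

definition good :: "complex mat list \<Rightarrow> bool" where
  "good ws \<longleftrightarrow> length ws \<ge> 1 \<and> set ws \<subseteq> A \<and> (\<forall>M\<in>A. mat_rank d M = 1 \<longrightarrow> count_list ws M \<le> 1)"

lemma fstV: "fst ` V \<subseteq> Os" unfolding V_def by auto

lemma word_good: assumes ne: "ps \<noteq> []" and V: "set ps \<subseteq> V" and dist: "distinct (map fst ps)"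
  shows "good (word ps)"
proof -
  have "length (word ps) \<ge> 1" using ne
    by (cases ps) (auto simp: word_def split: prod.splits)
  moreover have "set (word ps) \<subseteq> A" using word_A[OF V] .
  moreover have "count_list (word ps) M \<le> 1" if "M \<in> A" "mat_rank d M = 1" for M
  proof -
    have "M \<notin> Rs" using that unfolding Rs_def by auto
    hence "count_list (word ps) M = count_list (map fst ps) M" using count_word[OF V] by simp
    also have "\<dots> \<le> 1" using count_distinct[OF dist] .
    finally show ?thesis .
  qed
  ultimately show ?thesis unfolding good_def by auto
qed

theorem main:
  assumes hyp: "Rs = {} \<or> jsr d Rs < jsr d A"
  shows "\<exists>ws. length ws \<ge> 1 \<and> set ws \<subseteq> A \<and>
           (\<forall>M \<in> A. mat_rank d M = 1 \<longrightarrow> count_list ws M \<le> 1) \<and>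
           jsr d A = spectral_radius (pr ws) powr (1 / real (length ws))"
proof (rule ccontr)
  assume nex: "\<not> ?thesis"
  define s where "s = LL d A"
  have js: "jsr d A = s" unfolding s_def by (rule jsr_eq[OF d fin ne car])
  have F1: "spectral_radius (pr ws) powr (1 / real (length ws)) \<le> s" if "good ws" for ws
    unfolding s_def using that unfolding good_def by (intro spec_le_LL[OF d fin ne car]) auto
  have lt: "spectral_radius (pr ws) powr (1 / real (length ws)) < s" if "good ws" for ws
    using F1[OF that] nex that js unfolding good_def by force
  obtain M0 where M0: "M0 \<in> A" using ne by auto
  have gM0: "good [M0]" using M0 unfolding good_def by auto
  have s0: "0 < s"
    using lt[OF gM0] spec_nonneg[of "pr [M0]" d] pr_carrier[of "[M0]" d] M0 car d by force
  obtain r CR where r: "0 < r" "r < s" and CR0: "0 \<le> CR"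
    and CR: "\<And>W. set W \<subseteq> Rs \<Longrightarrow> nrm (pr W) \<le> CR * r ^ length W"
    using R_bound[OF hyp] s0 unfolding s_def by blast
  define t1 where "t1 = (r + s) / 2"
  have t1: "r < t1" "t1 < s" unfolding t1_def using r by auto
  define D1 where "D1 = X * Y * CR / r"
  define Q where "Q = max 1 D1"
  define k where "k = card Os"
  have Q1: "Q \<ge> 1" unfolding Q_def by simp
  have edge1: "cmod (ed a b) \<le> D1 * r ^ lf a" if "a \<in> V" "b \<in> V" for a b
    unfolding D1_def by (rule edge_bound[OF CR r(1) order.refl that])
  have crude: "cmod (cw ed ps) \<le> Q ^ Suc k * r ^ lens lf ps"
    if ps: "ps \<noteq> []" "set ps \<subseteq> V" "distinct (map fst ps)" for ps
  proof -
    have "length ps = card (set (map fst ps))" using distinct_card[OF ps(3)] by simp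
    also have "\<dots> \<le> card Os" using ps(2) fstV finOs by (intro card_mono) auto
    finally have len: "length ps \<le> k" unfolding k_def .
    have "cmod (cw ed ps) \<le> Q ^ Suc (length ps) * r ^ lens lf ps"
      unfolding Q_def by (rule cw_crude[OF r(1) edge1 ps(1,2)]) auto
    also have "\<dots> \<le> Q ^ Suc k * r ^ lens lf ps"
      using Q1 len r by (intro mult_right_mono power_increasing) auto
    finally show ?thesis .
  qed
  have "(\<lambda>L. Q ^ Suc k * (r / t1) ^ L) \<longlonglongrightarrow> Q ^ Suc k * 0"
    using r t1 by (intro tendsto_intros LIMSEQ_power_zero) auto
  hence "eventually (\<lambda>L. Q ^ Suc k * (r / t1) ^ L < 1) sequentially"
    by (intro order_tendstoD(2)) auto
  then obtain L0 where L0: "\<And>L. L \<ge> L0 \<Longrightarrow> Q ^ Suc k * (r / t1) ^ L < 1"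
    by (auto simp: eventually_sequentially)
  have long: "Q ^ Suc k * r ^ L \<le> t1 ^ L" if "L \<ge> L0" for L
  proof -
    have t1p: "t1 > 0" using t1 r by simp
    have "Q ^ Suc k * r ^ L = (Q ^ Suc k * (r / t1) ^ L) * t1 ^ L"
      using t1p by (simp add: power_divide)
    also have "\<dots> \<le> 1 * t1 ^ L" using L0[OF that] t1p
      by (intro mult_right_mono) auto
    finally show ?thesis by simp
  qed
  define GW where "GW = {ws. good ws \<and> length ws < L0}"
  have finGW: "finite GW"
  proof -
    have "GW \<subseteq> (\<Union>n<L0. wds A n)" unfolding GW_def good_def wds_def by auto
    moreover have "finite (\<Union>n<L0. wds A n)" using wds_finite[OF fin] by auto
    ultimately show ?thesis by (rule finite_subset)
  qed
  define rf where "rf ws = spectral_radius (pr ws) powr (1 / real (length ws))" for ws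
  define t2 where "t2 = Max (insert 0 (rf ` GW))"
  have t2ge: "rf ws \<le> t2" if "ws \<in> GW" for ws
    unfolding t2_def using finGW that by (intro Max_ge) auto
  have t2: "t2 < s" unfolding t2_def using finGW s0 lt unfolding GW_def rf_def by (subst Max_less_iff) auto
  define t where "t = max t1 t2"
  have t: "r < t" "t < s" "0 < t" unfolding t_def using t1 t2 r by auto
  have goodcyc: "cmod (cw ed ps) \<le> t ^ lens lf ps"
    if ps: "ps \<noteq> []" "set ps \<subseteq> V" "distinct (map fst ps)" for ps
  proof (cases "lens lf ps \<ge> L0")
    case True
    have "cmod (cw ed ps) \<le> Q ^ Suc k * r ^ lens lf ps" by (rule crude[OF ps])
    also have "\<dots> \<le> t1 ^ lens lf ps" by (rule long[OF True])
    also have "\<dots> \<le> t ^ lens lf ps" unfolding t_def using t1 r by (intro power_mono) auto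
    finally show ?thesis .
  next
    case False
    define L where "L = lens lf ps"
    have gw: "word ps \<in> GW" unfolding GW_def using word_good[OF ps] False len_word[of ps] by auto
    have L1: "L \<ge> 1" using gw unfolding GW_def good_def L_def len_word by auto
    have Pc: "pr (word ps) \<in> carrier_mat d d" using word_A[OF ps(2)] car by (intro pr_carrier) auto
    have "cmod (cw ed ps) \<le> spectral_radius (pr (word ps))" by (rule cw_le_spec[OF ps(1,2)])
    also have "\<dots> = (rf (word ps)) ^ L" unfolding rf_def L_def len_word
      using pow_powr_inv[OF spec_nonneg[OF Pc d]] L1 unfolding L_def len_word by simp
    also have "\<dots> \<le> t ^ L" using t2ge[OF gw] unfolding t_def rf_def
      by (intro power_mono) auto
    finally show ?thesis unfolding L_def .
  qed
  have allcyc: "cmod (cw ed ps) \<le> t ^ lens lf ps" if "ps \<noteq> []" "set ps \<subseteq> V" for ps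
    by (rule cycle_all[where key=fst, OF ed_key t(3) goodcyc that]) auto
  define D2 where "D2 = X * Y * CR / t"
  have edge2: "cmod (ed a b) \<le> D2 * t ^ lf a" if "a \<in> V" "b \<in> V" for a b
    unfolding D2_def by (rule edge_bound[OF CR r(1) _ that]) (use t in auto)
  define E where "E = (max 1 D2) ^ card (fst ` V)"
  have E0: "E \<ge> 0" unfolding E_def by simp
  have finV: "finite (fst ` V)" using fstV finOs finite_subset by blast
  have path: "cmod (om ed ps) * t ^ lf (last ps) \<le> E * t ^ lens lf ps" if "ps \<noteq> []" "set ps \<subseteq> V" for ps
    unfolding E_def by (rule path_all[where key=fst, OF ed_key t(3) edge2 allcyc finV that]) auto
  define Gc where "Gc = CR + CR * CR * X * Y * E / t + 1"
  have Gc: "Gc > 0" unfolding Gc_def using CR0 X0 Y0 E0 t by (simp add: add_nonneg_pos)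
  have rt: "r ^ n \<le> t ^ n" for n using r t by (intro power_mono) auto
  have CRt: "nrm (pr W) \<le> CR * t ^ length W" if "set W \<subseteq> Rs" for W
    using CR[OF that] mult_left_mono[OF rt CR0] by (rule order.trans)
  have wb: "nrm (pr u) \<le> Gc * t ^ length u" if u: "set u \<subseteq> A" for u
  proof -
    obtain W0 ps where dec': "u = W0 @ word ps" "set W0 \<subseteq> Rs" "set ps \<subseteq> V"
      using decomp[OF u] by blast
    have W0c: "set W0 \<subseteq> carrier_mat d d" using dec'(2) car OR by auto
    have wc: "set (word ps) \<subseteq> carrier_mat d d" using word_A[OF dec'(3)] car by auto
    show ?thesis
    proof (cases "ps = []")
      case True
      hence "nrm (pr u) \<le> CR * t ^ length u" using CRt[OF dec'(2)] dec'(1) by simp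
      also have "\<dots> \<le> Gc * t ^ length u" using t CR0 X0 Y0 E0 unfolding Gc_def
        by (intro mult_right_mono) (auto simp: add_nonneg_nonneg)
      finally show ?thesis .
    next
      case False
      define om' where "om' = cmod (om ed ps)"
      obtain Ml Wl where l: "last ps = (Ml, Wl)" by fastforce
      have lV: "(Ml, Wl) \<in> V" using l False dec'(3) last_in_set by (metis subsetD)
      have Wl: "set Wl \<subseteq> Rs" and Ml: "Ml \<in> Os" using lV unfolding V_def by auto
      have Wlc: "pr Wl \<in> carrier_mat d d" using Wl car OR by (intro pr_carrier) auto
      have "hd ps \<in> V" using hd_in_set[OF False] dec'(3) by blast
      hence hO: "fst (hd ps) \<in> Os" unfolding V_def by auto
      have om0: "0 \<le> om'" unfolding om'_def by simp
      have p: "om' * t ^ length Wl * t \<le> E * t ^ lens lf ps"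
        using path[OF False dec'(3)] unfolding l om'_def lf_def by (simp add: mult_ac)
      have nz: "nf d (rowmul d (yf Ml) (pr Wl)) \<le> Y * (CR * t ^ length Wl)"
        using nf_rowmul[OF Wlc, of "yf Ml"] nfY[OF Ml] CRt[OF Wl]
        by (meson Y0 nf_nonneg nrm_nonneg mult_mono order.trans)
      have "nrm (pr u) \<le> nrm (pr W0) * nrm (pr (word ps))"
        unfolding dec'(1) pr_append[OF W0c wc] by (rule nrm_mult[OF pr_carrier[OF W0c] pr_carrier[OF wc]])
      also have "nrm (pr (word ps)) = om' * (nf d (xf (fst (hd ps))) * nf d (rowmul d (yf Ml) (pr Wl)))"
        unfolding pr_word[OF False dec'(3)] nrm_smult nrm_outer om'_def l by simp
      also have "\<dots> \<le> om' * (X * (Y * (CR * t ^ length Wl)))"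
        by (intro mult_left_mono om0 mult_mono nfX[OF hO] nz) (auto simp: X0 nf_nonneg)
      also have "\<dots> = (X * Y * CR / t) * (om' * t ^ length Wl * t)" using t by (simp add: field_simps)
      also have "\<dots> \<le> (X * Y * CR / t) * (E * t ^ lens lf ps)"
        using X0 Y0 CR0 t by (intro mult_left_mono p) auto
      finally have "nrm (pr u) \<le> nrm (pr W0) * ((X * Y * CR / t) * (E * t ^ lens lf ps))"
        using nrm_nonneg by (simp add: mult_left_mono)
      also have "\<dots> \<le> (CR * t ^ length W0) * ((X * Y * CR / t) * (E * t ^ lens lf ps))"
        using CRt[OF dec'(2)] X0 Y0 CR0 t E0 by (intro mult_right_mono) auto
      also have "\<dots> = (CR * CR * X * Y * E / t) * t ^ length u"
        unfolding dec'(1) by (simp add: power_add field_simps len_word)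
      also have "\<dots> \<le> Gc * t ^ length u" using t CR0 unfolding Gc_def
        by (intro mult_right_mono) auto
      finally show ?thesis .
    qed
  qed
  have gup: "s \<le> Gc powr (1 / real n) * t" if n: "n \<ge> 1" for n
  proof -
    obtain u where u: "u \<in> wds A n" "bb d A n = nrm (pr u)" using bb_attained[OF fin ne] by blast
    have "bb d A n \<le> Gc * t ^ n" using u wb unfolding wds_def by auto
    hence "gg d A n \<le> (Gc * t ^ n) powr (1 / real n)" unfolding gg_def
      using bb_nonneg[OF fin ne] by (intro powr_mono2) auto
    also have "\<dots> = Gc powr (1 / real n) * (t ^ n) powr (1 / real n)"
      using Gc t by (intro powr_mult)
    also have "(t ^ n) powr (1 / real n) = t"
    proof -
      have "t ^ n = t powr real n" using t by (simp add: powr_realpow)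
      thus ?thesis using n t by (simp add: powr_powr)
    qed
    finally have "gg d A n \<le> Gc powr (1 / real n) * t" .
    moreover have "s \<le> gg d A n" unfolding s_def using n by (rule LL_le[OF fin ne])
    ultimately show ?thesis by simp
  qed
  have "(\<lambda>n. Gc powr (1 / real n) * t) \<longlonglongrightarrow> Gc powr 0 * t"
    using Gc by (intro tendsto_intros lim_1_over_n) auto
  hence "(\<lambda>n. Gc powr (1 / real n) * t) \<longlonglongrightarrow> t" using Gc by simp
  hence "s \<le> t" by (rule LIMSEQ_le_const) (use gup in auto)
  thus False using t by simp
qed

end

theorem theorem1:
  fixes d :: nat and A :: "complex mat set"
  assumes "0 < d"
    and "finite A" and "A \<noteq> {}"
    and "A \<subseteq> carrier_mat d d"
    and "{M \<in> A. 2 \<le> mat_rank d M} = {} \<or>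
         jsr d {M \<in> A. 2 \<le> mat_rank d M} < jsr d A"
  shows "\<exists>ws. length ws \<ge> 1 \<and> set ws \<subseteq> A \<and>
           (\<forall>M \<in> A. mat_rank d M = 1 \<longrightarrow> count_list ws M \<le> 1) \<and>
           jsr d A = spectral_radius (mat_list_prod d ws) powr (1 / real (length ws))"
proof -
  have "\<forall>M\<in>A. \<exists>xy. mat_rank d M \<le> 1 \<longrightarrow> M = outer d (fst xy) (snd xy)"
  proof
    fix M assume M: "M \<in> A"
    show "\<exists>xy. mat_rank d M \<le> 1 \<longrightarrow> M = outer d (fst xy) (snd xy)"
    proof (cases "mat_rank d M \<le> 1")
      case True
      then obtain x y where "M = outer d x y" using rank_le1_outer_mat[of M d] M assms(4) by blast
      thus ?thesis by (intro exI[of _ "(x, y)"]) simp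
    qed simp
  qed
  from bchoice[OF this] obtain f where f0: "\<forall>M\<in>A. mat_rank d M \<le> 1 \<longrightarrow> M = outer d (fst (f M)) (snd (f M))"
    by blast
  have f: "\<And>M. M \<in> A \<Longrightarrow> mat_rank d M \<le> 1 \<Longrightarrow> M = outer d (fst (f M)) (snd (f M))"
    using f0 by blast
  interpret jset d A "\<lambda>M. fst (f M)" "\<lambda>M. snd (f M)"
    by unfold_locales (use assms f in blast)+
  show ?thesis using main assms(5) unfolding Rs_def by blast
qed

end
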